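(* Fix $m\ge1$ and write $x=t_m$. Let $H^{(1)}(x),\dots,H^{(m)}(x)$ be arbitrary Laurent series of the form $H^{(a)}=z^a+\sum_{l\ge1}H^a_l(x)z^{-l}$ with coefficients smooth functions of $x$, and set $H^{(0)}=1$. Define $H^{(j)}$ for $j>m$ recursively by $$H^{(j+m)}=\Big(\frac{\partial}{\partial x}+H^{(m)}\Big)H^{(j)}-\sum_{l=1}^{j}H^m_lH^{(j-l)}-\sum_{l=1}^{m}H^j_lH^{(m-l)},\qquad j\ge0 .$$ Then each $H^{(j)}$ is of the form $z^j+\sum_{l\ge1}H^j_l(x)z^{-l}$, where the $H^j_l$ are differential polynomials in the coefficients of $H^{(1)},\dots,H^{(m)}$, and $x\mapsto(H^{(k)}(x))_{k\ge0}$ is an integral curve of $X_m$ in $\mathcal H$. Conversely, every integral curve of $X_m$ (parametrized by $x=t_m$) is obtained in this way from its first $m$ currents. Hence the space $\mathcal Q_m$ of orbits of $X_m$ is identified with the space of $m$-tuples $(H^{(1)}(x),\dots,H^{(m)}(x))$ of such Laurent series with arbitrary $x$-dependent coefficients.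
   Context: Let $z$ be a formal variable and $\mathcal L$ the space of formal Laurent series $\sum_{j\le N} l_j z^j$ (finitely many positive powers of $z$). Let $\mathcal H$ be the set of sequences $H=(H^{(k)})_{k\ge0}$ of elements of $\mathcal L$ with $H^{(0)}=1$ and, for $k\ge1$, $H^{(k)}=z^k+\sum_{l\ge1}H^k_l z^{-l}$; the coefficients $H^k_l$ are coordinates on $\mathcal H$, and we set $H^0_l=0$. The central system (CS) is the family of vector fields $X_j$, $j\ge1$, on $\mathcal H$, with associated times $t_j$, defined by $$\frac{\partial H^{(k)}}{\partial t_j}=H^{(j+k)}-H^{(j)}H^{(k)}+\sum_{l=1}^{k}H^j_lH^{(k-l)}+\sum_{l=1}^{j}H^k_lH^{(j-l)},\qquad k\ge0;$$ the right-hand side contains only negative powers of $z$, so this determines the components $X_j(H^k_l)$. *)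

theory Defs
  imports "HOL-Analysis.Analysis" "HOL-Computational_Algebra.Formal_Laurent_Series"
begin

text \<open>A formal Laurent series in z with finitely many positive powers of z
  is represented by a formal Laurent series (type real fls) in the variable w = z^{-1},
  which has finitely many negative powers of w. Thus z = fls_X_inv, and the coefficient
  of z^i is fls_nth F (-i).\<close>

abbreviation zvar :: "real fls" where "zvar \<equiv> fls_X_inv"

definition hc :: "real fls \<Rightarrow> nat \<Rightarrow> real" where
  "hc F l = fls_nth F (int l)"

text \<open>The space H: H^(0) = 1 and H^(k) = z^k + sum_{l>=1} H^k_l z^{-l} for k >= 1.\<close>
definition Hspace :: "(nat \<Rightarrow> real fls) set" where
  "Hspace = {H. H 0 = 1 \<and>
     (\<forall>k\<ge>1. \<forall>i::int. i \<le> 0 \<longrightarrow> fls_nth (H k) i = (if i = - int k then 1 else 0))}"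

text \<open>Right-hand side of the central system for d/dt_j of H^(k).\<close>
definition cs_rhs :: "(nat \<Rightarrow> real fls) \<Rightarrow> nat \<Rightarrow> nat \<Rightarrow> real fls" where
  "cs_rhs H j k = H (j + k) - H j * H k
      + (\<Sum>l=1..k. fls_const (hc (H j) l) * H (k - l))
      + (\<Sum>l=1..j. fls_const (hc (H k) l) * H (j - l))"

definition Xcomp :: "nat \<Rightarrow> (nat \<Rightarrow> real fls) \<Rightarrow> nat \<Rightarrow> nat \<Rightarrow> real" where
  "Xcomp j H k l = hc (cs_rhs H j k) l"

definition integral_curve :: "nat \<Rightarrow> (real \<Rightarrow> nat \<Rightarrow> real fls) \<Rightarrow> bool" where
  "integral_curve m \<gamma> \<longleftrightarrow> (\<forall>x. \<gamma> x \<in> Hspace) \<and>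
     (\<forall>x k l. 1 \<le> l \<longrightarrow>
        ((\<lambda>y. hc (\<gamma> y k) l) has_real_derivative Xcomp m (\<gamma> x) k l) (at x))"

definition smooth_fun :: "(real \<Rightarrow> real) \<Rightarrow> bool" where
  "smooth_fun f \<longleftrightarrow> (\<forall>n x. ((deriv ^^ n) f) differentiable (at x))"

text \<open>Coefficientwise x-derivative of an x-dependent series (set to 0 in the degenerate
  case where the coefficientwise derivative would not have finitely many positive powers of z).\<close>
definition fls_dx :: "(real \<Rightarrow> real fls) \<Rightarrow> real \<Rightarrow> real fls" where
  "fls_dx F x = (if (\<forall>\<^sub>\<infinity> n::nat. deriv (\<lambda>y. fls_nth (F y) (- int n)) x = 0)
     then Abs_fls (\<lambda>i. deriv (\<lambda>y. fls_nth (F y) i) x) else 0)"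

definition cur :: "nat \<Rightarrow> (nat \<Rightarrow> real) \<Rightarrow> real fls" where
  "cur k c = zvar ^ k + Abs_fls (\<lambda>i. if 1 \<le> i then c (nat i) else 0)"

text \<open>The currents generated by the data h a l x = H^a_l(x) (1 <= a <= m, l >= 1) via
  H^(j+m) = (d/dx + H^(m)) H^(j) - sum_{l=1}^j H^m_l H^(j-l) - sum_{l=1}^m H^j_l H^(m-l).
  (The case m = 0 is excluded in the theorem; a dummy value is used.)\<close>
function gen :: "nat \<Rightarrow> (nat \<Rightarrow> nat \<Rightarrow> real \<Rightarrow> real) \<Rightarrow> nat \<Rightarrow> real \<Rightarrow> real fls" where
  "gen m h n = (if n = 0 then (\<lambda>x. 1)
     else if n \<le> m \<or> m = 0 then (\<lambda>x. cur n (\<lambda>l. h n l x))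
     else (\<lambda>x. fls_dx (gen m h (n - m)) x + gen m h m x * gen m h (n - m) x
             - (\<Sum>l=1..n - m. fls_const (hc (gen m h m x) l) * gen m h (n - m - l) x)
             - (\<Sum>l=1..m. fls_const (hc (gen m h (n - m) x) l) * gen m h (m - l) x)))"
  by auto
termination
  by (relation "Wellfounded.measure (\<lambda>(m, h, n). n)") auto

text \<open>Differential polynomials in the variables H^a_l (a, l) and their x-derivatives.
  DVar a l r stands for the r-th x-derivative of H^a_l.\<close>
datatype dpoly = DConst real | DVar nat nat nat | DAdd dpoly dpoly | DMul dpoly dpoly

fun dp_eval :: "dpoly \<Rightarrow> (nat \<Rightarrow> nat \<Rightarrow> real \<Rightarrow> real) \<Rightarrow> real \<Rightarrow> real" where
  "dp_eval (DConst c) h x = c"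
| "dp_eval (DVar a l r) h x = (deriv ^^ r) (h a l) x"
| "dp_eval (DAdd p q) h x = dp_eval p h x + dp_eval q h x"
| "dp_eval (DMul p q) h x = dp_eval p h x * dp_eval q h x"

fun dp_vars :: "dpoly \<Rightarrow> (nat \<times> nat) set" where
  "dp_vars (DConst c) = {}"
| "dp_vars (DVar a l r) = {(a, l)}"
| "dp_vars (DAdd p q) = dp_vars p \<union> dp_vars q"
| "dp_vars (DMul p q) = dp_vars p \<union> dp_vars q"

text \<open>Admissible data: smooth coefficients for 1 <= a <= m, l >= 1, zero otherwise
  (normalization so that data and m-tuples correspond one-to-one).\<close>
definition data_space :: "nat \<Rightarrow> (nat \<Rightarrow> nat \<Rightarrow> real \<Rightarrow> real) set" where
  "data_space m = {h. (\<forall>a l. 1 \<le> a \<and> a \<le> m \<and> 1 \<le> l \<longrightarrow> smooth_fun (h a l)) \<and>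
                      (\<forall>a l. \<not> (1 \<le> a \<and> a \<le> m \<and> 1 \<le> l) \<longrightarrow> h a l = (\<lambda>_. 0))}"

definition first_currents :: "nat \<Rightarrow> (real \<Rightarrow> nat \<Rightarrow> real fls) \<Rightarrow> nat \<Rightarrow> nat \<Rightarrow> real \<Rightarrow> real" where
  "first_currents m \<gamma> a l x = (if 1 \<le> a \<and> a \<le> m \<and> 1 \<le> l then hc (\<gamma> x a) l else 0)"

end

theory Submission
  imports Defs
begin
lemma fls_mult_bounded:
  fixes f g :: "real fls"
  assumes f: "\<And>t. t < -A \<Longrightarrow> fls_nth f t = 0" and g: "\<And>t. t < -B \<Longrightarrow> fls_nth g t = 0"
  shows "fls_nth (f * g) n = (\<Sum>t=-A..n+B. fls_nth f t * fls_nth g (n - t))"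
proof (cases "f = 0 \<or> g = 0")
  case True then show ?thesis by auto
next
  case False
  then have nz: "f \<noteq> 0" "g \<noteq> 0" by auto
  have df: "-A \<le> fls_subdegree f" using fls_subdegree_geI[OF nz(1)] f by blast
  have dg: "-B \<le> fls_subdegree g" using fls_subdegree_geI[OF nz(2)] g by blast
  have "fls_nth (f * g) n = (\<Sum>t=fls_subdegree f..n - fls_subdegree g. fls_nth f t * fls_nth g (n - t))"
    by (rule fls_times_nth(2))
  also have "\<dots> = (\<Sum>t=-A..n+B. fls_nth f t * fls_nth g (n - t))"
  proof (rule sum.mono_neutral_left)
    show "{fls_subdegree f..n - fls_subdegree g} \<subseteq> {- A..n + B}" using df dg by auto
    show "\<forall>i\<in>{- A..n + B} - {fls_subdegree f..n - fls_subdegree g}. fls_nth f i * fls_nth g (n - i) = 0"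
    proof
      fix i assume "i \<in> {- A..n + B} - {fls_subdegree f..n - fls_subdegree g}"
      then have "i < fls_subdegree f \<or> n - i < fls_subdegree g" by auto
      then show "fls_nth f i * fls_nth g (n - i) = 0" by (auto simp: fls_eq0_below_subdegree)
    qed
  qed auto
  finally show ?thesis .
qed


definition shape :: "nat \<Rightarrow> real fls \<Rightarrow> bool" where
  "shape k F \<longleftrightarrow> (\<forall>i::int. i \<le> 0 \<longrightarrow> fls_nth F i = (if i = - int k then 1 else 0)) \<and> (k = 0 \<longrightarrow> F = 1)"

lemma Hspace_iff: "H \<in> Hspace \<longleftrightarrow> (\<forall>k. shape k (H k))"
proof
  assume H: "H \<in> Hspace"
  show "\<forall>k. shape k (H k)"
  proof
    fix k show "shape k (H k)"
      using H by (cases "k = 0") (auto simp: Hspace_def shape_def)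
  qed
next
  assume "\<forall>k. shape k (H k)"
  then show "H \<in> Hspace" unfolding Hspace_def shape_def by auto
qed

lemma shape0: "shape 0 1" by (simp add: shape_def)

definition negp :: "(nat \<Rightarrow> real) \<Rightarrow> real fls" where
  "negp c = Abs_fls (\<lambda>i. if 1 \<le> i then c (nat i) else 0)"

lemma negp_nth: "fls_nth (negp c) i = (if 1 \<le> i then c (nat i) else 0)"
  unfolding negp_def by (rule nth_Abs_fls_ex_lower_bound) (rule exI[of _ 1], auto)

lemma cur_eq: "cur k c = zvar ^ k + negp c"
  unfolding cur_def negp_def by simp

lemma cur_nth: "fls_nth (cur k c) i = (if i = - int k then 1 else 0) + (if 1 \<le> i then c (nat i) else 0)"
  by (simp add: cur_eq negp_nth)

lemma hc_cur: "1 \<le> l \<Longrightarrow> hc (cur k c) l = c l"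
  by (simp add: hc_def cur_nth)

lemma shape_cur: "1 \<le> k \<Longrightarrow> shape k (cur k c)"
  by (simp add: shape_def cur_nth)

lemma shape_eq_cur: assumes "1 \<le> k" "shape k F" shows "F = cur k (hc F)"
proof (rule fls_eqI)
  fix i
  show "fls_nth F i = fls_nth (cur k (hc F)) i"
    using assms by (cases "i \<le> 0") (auto simp: shape_def cur_nth hc_def)
qed

lemma cur_cong: "(\<And>l. 1 \<le> l \<Longrightarrow> c l = d l) \<Longrightarrow> cur k c = cur k d"
  by (rule fls_eqI) (simp add: cur_nth)

lemma shape_lower: "shape k F \<Longrightarrow> t < - int k \<Longrightarrow> fls_nth F t = 0"
  by (simp add: shape_def)

lemma shape_nonpos: "shape k F \<Longrightarrow> i \<le> 0 \<Longrightarrow> fls_nth F i = (if i = - int k then 1 else 0)"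
  by (simp add: shape_def)

lemma negp_mult: assumes "i \<le> 1" shows "fls_nth (negp a * negp b) i = 0"
proof -
  have "fls_nth (negp a * negp b) i = (\<Sum>t=-(-1)..i+(-1). fls_nth (negp a) t * fls_nth (negp b) (i - t))"
    by (rule fls_mult_bounded) (auto simp: negp_nth)
  also have "\<dots> = 0" using assms by simp
  finally show ?thesis .
qed

lemma sum_shape_nth:
  assumes "\<forall>n < b. shape n (F n)" "i \<le> 0"
  shows "fls_nth (\<Sum>l=1..b. fls_const (c l) * F (b - l)) i = (if 1 \<le> int b + i then c (nat (int b + i)) else 0)"
proof -
  have "fls_nth (\<Sum>l=1..b. fls_const (c l) * F (b - l)) i = (\<Sum>l=1..b. c l * fls_nth (F (b - l)) i)"
    by (simp add: fls_nth_sum)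
  also have "\<dots> = (\<Sum>l\<in>{1..b}. if l = nat (int b + i) then c l else 0)"
  proof (rule sum.cong)
    fix l assume l: "l \<in> {1..b}"
    then have "shape (b - l) (F (b - l))" using assms by auto
    then have "fls_nth (F (b - l)) i = (if i = - int (b - l) then 1 else 0)" using assms(2) shape_nonpos by blast
    then show "c l * fls_nth (F (b - l)) i = (if l = nat (int b + i) then c l else 0)" using l by auto
  qed simp
  also have "\<dots> = (if 1 \<le> int b + i then c (nat (int b + i)) else 0)"
    using assms(2) by (auto simp add: sum.delta)
  finally show ?thesis .
qed

lemma prod_cur_nth:
  assumes "i \<le> 0"
  shows "fls_nth (cur a ca * cur b cb) i = (if i = - int (a + b) then 1 else 0)
     + (if 1 \<le> i + int a then cb (nat (i + int a)) else 0) + (if 1 \<le> i + int b then ca (nat (i + int b)) else 0)"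
proof -
  have "cur a ca * cur b cb = zvar ^ (a + b) + zvar ^ a * negp cb + zvar ^ b * negp ca + negp ca * negp cb"
    by (simp add: cur_eq algebra_simps power_add)
  then show ?thesis using assms
    by (simp add: fls_X_inv_power_times_conv_shift negp_nth negp_mult)
qed

lemma keyA:
  assumes sh: "\<forall>n \<le> max a b. shape n (F n)" and i: "i \<le> 0"
  shows "fls_nth (F a * F b - (\<Sum>l=1..b. fls_const (hc (F a) l) * F (b - l))
     - (\<Sum>l=1..a. fls_const (hc (F b) l) * F (a - l))) i = (if i = - int (a + b) then 1 else 0)"
proof -
  have s1: "fls_nth (\<Sum>l=1..b. fls_const (hc (F a) l) * F (b - l)) i = (if 1 \<le> int b + i then hc (F a) (nat (int b + i)) else 0)"
    by (rule sum_shape_nth) (use sh i in auto)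
  have s2: "fls_nth (\<Sum>l=1..a. fls_const (hc (F b) l) * F (a - l)) i = (if 1 \<le> int a + i then hc (F b) (nat (int a + i)) else 0)"
    by (rule sum_shape_nth) (use sh i in auto)
  have sa: "shape a (F a)" and sb: "shape b (F b)" using sh by auto
  show ?thesis
  proof (cases "a = 0 \<or> b = 0")
    case True
    then show ?thesis
    proof
      assume a0: "a = 0"
      then have "F a = 1" using sa by (simp add: shape_def)
      then show ?thesis using a0 s1 s2 i shape_nonpos[OF sb i] by (auto simp: hc_def)
    next
      assume b0: "b = 0"
      then have "F b = 1" using sb by (simp add: shape_def)
      then show ?thesis using b0 s1 s2 i shape_nonpos[OF sa i] by (auto simp: hc_def)
    qed
  next
    case False
    then have "F a = cur a (hc (F a))" "F b = cur b (hc (F b))"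
      using shape_eq_cur sa sb by auto
    then have "fls_nth (F a * F b) i = (if i = - int (a + b) then 1 else 0)
     + (if 1 \<le> i + int a then hc (F b) (nat (i + int a)) else 0) + (if 1 \<le> i + int b then hc (F a) (nat (i + int b)) else 0)"
      using prod_cur_nth[OF i] by metis
    then show ?thesis using s1 s2 by (simp add: algebra_simps)
  qed
qed


declare gen.simps[simp del]

lemma gen_0: "gen m h 0 x = 1"
  by (subst gen.simps) simp

lemma gen_le: "1 \<le> n \<Longrightarrow> n \<le> m \<Longrightarrow> gen m h n x = cur n (\<lambda>l. h n l x)"
  by (subst gen.simps) simp

lemma gen_gt: "1 \<le> m \<Longrightarrow> m < n \<Longrightarrow> gen m h n x =
   fls_dx (gen m h (n - m)) x + gen m h m x * gen m h (n - m) x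
             - (\<Sum>l=1..n - m. fls_const (hc (gen m h m x) l) * gen m h (n - m - l) x)
             - (\<Sum>l=1..m. fls_const (hc (gen m h (n - m) x) l) * gen m h (m - l) x)"
  by (subst gen.simps) simp

lemma deriv_const_fun: "(\<And>y. f y = c) \<Longrightarrow> deriv f x = 0"
proof -
  assume "\<And>y. f y = c"
  then have "f = (\<lambda>_. c)" by auto
  then show ?thesis by simp
qed

lemma fls_dx_nth:
  assumes "\<forall>y. shape j (F y)"
  shows "fls_nth (fls_dx F x) i = deriv (\<lambda>y. fls_nth (F y) i) x"
proof -
  have d0: "deriv (\<lambda>y. fls_nth (F y) i) x = 0" if "i \<le> 0" for i
    by (rule deriv_const_fun[where c="if i = - int j then 1 else 0"]) (use assms that in \<open>auto simp: shape_def\<close>)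
  have ev: "\<forall>\<^sub>\<infinity> n::nat. deriv (\<lambda>y. fls_nth (F y) (- int n)) x = 0"
    using d0 by simp
  then have "fls_dx F x = Abs_fls (\<lambda>i. deriv (\<lambda>y. fls_nth (F y) i) x)"
    by (simp add: fls_dx_def)
  then show ?thesis using ev by simp
qed

lemma fls_dx_nonpos:
  assumes "\<forall>y. shape j (F y)" "i \<le> 0"
  shows "fls_nth (fls_dx F x) i = 0"
  unfolding fls_dx_nth[OF assms(1)]
  by (rule deriv_const_fun[where c="if i = - int j then 1 else 0"]) (use assms in \<open>auto simp: shape_def\<close>)

lemma gen_shape:
  assumes m: "1 \<le> m"
  shows "shape n (gen m h n x)"
proof (induction n arbitrary: x rule: less_induct)
  case (less n)
  show ?case
  proof (cases "n = 0")
    case True then show ?thesis by (simp add: gen_0 shape0)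
  next
    case n0: False
    show ?thesis
    proof (cases "n \<le> m")
      case True then show ?thesis using n0 by (simp add: gen_le shape_cur)
    next
      case False
      define j where "j = n - m"
      have nj: "n = m + j" "j < n" "m < n" using False m j_def by auto
      have shj: "\<forall>y. shape j (gen m h j y)" using less nj by auto
      have sh: "\<forall>k \<le> max m j. shape k (gen m h k x)" using less nj by auto
      have eq: "gen m h n x = fls_dx (gen m h j) x + (gen m h m x * gen m h j x
             - (\<Sum>l=1..j. fls_const (hc (gen m h m x) l) * gen m h (j - l) x)
             - (\<Sum>l=1..m. fls_const (hc (gen m h j x) l) * gen m h (m - l) x))"
        using gen_gt[OF m nj(3), of h x] unfolding j_def by (simp add: algebra_simps)
      show ?thesis unfolding shape_def
      proof (intro conjI allI impI)
        fix i :: int assume i: "i \<le> 0"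
        show "fls_nth (gen m h n x) i = (if i = - int n then 1 else 0)"
          unfolding eq fls_plus_nth fls_dx_nonpos[OF shj i]
          using keyA[where F="\<lambda>k. gen m h k x" and a=m and b=j, OF sh i] nj by simp
      qed (use n0 in simp)
    qed
  qed
qed

lemma cs_rhs_nonpos:
  assumes sh: "\<forall>k \<le> m + j. shape k (H k)" and i: "i \<le> 0"
  shows "fls_nth (cs_rhs H m j) i = 0"
proof -
  have "cs_rhs H m j = H (m + j) - (H m * H j - (\<Sum>l=1..j. fls_const (hc (H m) l) * H (j - l))
     - (\<Sum>l=1..m. fls_const (hc (H j) l) * H (m - l)))"
    by (simp add: cs_rhs_def algebra_simps)
  moreover have "\<forall>n \<le> max m j. shape n (H n)" using sh by auto
  ultimately show ?thesis
    using keyA[where F=H and a=m and b=j, OF _ i] sh shape_nonpos[OF _ i, of "m+j" "H (m+j)"] by simp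
qed


lemma ic_shape: "integral_curve m \<gamma> \<Longrightarrow> shape k (\<gamma> x k)"
  unfolding integral_curve_def Hspace_iff by blast

lemma ic_deriv: "integral_curve m \<gamma> \<Longrightarrow> 1 \<le> l \<Longrightarrow>
   ((\<lambda>y. hc (\<gamma> y k) l) has_real_derivative Xcomp m (\<gamma> x) k l) (at x)"
  unfolding integral_curve_def by blast

lemma ic_dx:
  assumes ic: "integral_curve m \<gamma>"
  shows "fls_dx (\<lambda>y. \<gamma> y j) x = cs_rhs (\<gamma> x) m j"
proof (rule fls_eqI)
  fix i :: int
  have shj: "\<forall>y. shape j (\<gamma> y j)" using ic_shape[OF ic] by blast
  show "fls_nth (fls_dx (\<lambda>y. \<gamma> y j) x) i = fls_nth (cs_rhs (\<gamma> x) m j) i"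
  proof (cases "i \<le> 0")
    case True
    then show ?thesis using fls_dx_nonpos[OF shj True] cs_rhs_nonpos[OF _ True, of m j "\<gamma> x"] ic_shape[OF ic]
      by auto
  next
    case False
    then have i: "i = int (nat i)" "1 \<le> nat i" by auto
    have "((\<lambda>y. hc (\<gamma> y j) (nat i)) has_real_derivative Xcomp m (\<gamma> x) j (nat i)) (at x)"
      by (rule ic_deriv[OF ic i(2)])
    then have d: "deriv (\<lambda>y. hc (\<gamma> y j) (nat i)) x = Xcomp m (\<gamma> x) j (nat i)"
      by (rule DERIV_imp_deriv)
    have "fls_nth (fls_dx (\<lambda>y. \<gamma> y j) x) i = deriv (\<lambda>y. fls_nth (\<gamma> y j) i) x"
      by (rule fls_dx_nth[OF shj])
    also have "(\<lambda>y. fls_nth (\<gamma> y j) i) = (\<lambda>y. hc (\<gamma> y j) (nat i))"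
      using i by (simp add: hc_def)
    also note d
    also have "Xcomp m (\<gamma> x) j (nat i) = fls_nth (cs_rhs (\<gamma> x) m j) i"
      using i by (simp add: Xcomp_def hc_def)
    finally show ?thesis .
  qed
qed

lemma curve_gen:
  assumes m: "1 \<le> m" and ic: "integral_curve m \<gamma>"
  shows "\<gamma> x k = gen m (first_currents m \<gamma>) k x"
proof (induction k arbitrary: x rule: less_induct)
  case (less k)
  define h where "h = first_currents m \<gamma>"
  have "\<gamma> x k = gen m h k x"
  proof (cases "k = 0")
    case True then show ?thesis using ic_shape[OF ic, of 0 x] by (simp add: gen_0 shape_def)
  next
    case k0: False
    show ?thesis
    proof (cases "k \<le> m")
      case True
      have "gen m h k x = cur k (\<lambda>l. h k l x)" using True k0 by (simp add: gen_le)
      also have "\<dots> = cur k (hc (\<gamma> x k))"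
        by (rule cur_cong) (use True k0 in \<open>simp add: h_def first_currents_def\<close>)
      also have "\<dots> = \<gamma> x k" using shape_eq_cur[OF _ ic_shape[OF ic]] k0 by simp
      finally show ?thesis by simp
    next
      case False
      define j where "j = k - m"
      have nj: "k = m + j" "j < k" "m < k" using False m j_def by auto
      have IH: "\<And>n y. n < k \<Longrightarrow> gen m h n y = \<gamma> y n" using less h_def by auto
      have gj: "gen m h j = (\<lambda>y. \<gamma> y j)" using IH nj by auto
      have s1: "(\<Sum>l=1..j. fls_const (hc (gen m h m x) l) * gen m h (j - l) x)
          = (\<Sum>l=1..j. fls_const (hc (\<gamma> x m) l) * \<gamma> x (j - l))"
        using IH nj by (intro sum.cong) auto
      have s2: "(\<Sum>l=1..m. fls_const (hc (gen m h j x) l) * gen m h (m - l) x)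
          = (\<Sum>l=1..m. fls_const (hc (\<gamma> x j) l) * \<gamma> x (m - l))"
        using IH nj m by (intro sum.cong) auto
      have "gen m h k x = fls_dx (gen m h j) x + gen m h m x * gen m h j x
             - (\<Sum>l=1..j. fls_const (hc (gen m h m x) l) * gen m h (j - l) x)
             - (\<Sum>l=1..m. fls_const (hc (gen m h j x) l) * gen m h (m - l) x)"
        using gen_gt[OF m nj(3), of h x] unfolding j_def by simp
      also have "\<dots> = cs_rhs (\<gamma> x) m j + \<gamma> x m * \<gamma> x j
             - (\<Sum>l=1..j. fls_const (hc (\<gamma> x m) l) * \<gamma> x (j - l))
             - (\<Sum>l=1..m. fls_const (hc (\<gamma> x j) l) * \<gamma> x (m - l))"
        unfolding s1 s2 gj ic_dx[OF ic] using IH nj by simp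
      also have "\<dots> = \<gamma> x k" unfolding cs_rhs_def nj(1) by simp
      finally show ?thesis by simp
    qed
  qed
  then show ?case by (simp add: h_def)
qed


definition Vm :: "nat \<Rightarrow> (nat \<times> nat) set" where
  "Vm m = {(a, l'). 1 \<le> a \<and> a \<le> m \<and> 1 \<le> l'}"

definition isdp :: "nat \<Rightarrow> ((nat \<Rightarrow> nat \<Rightarrow> real \<Rightarrow> real) \<Rightarrow> real \<Rightarrow> real) \<Rightarrow> bool" where
  "isdp m F \<longleftrightarrow> (\<exists>p. dp_vars p \<subseteq> Vm m \<and> (\<forall>h \<in> data_space m. \<forall>x. F h x = dp_eval p h x))"

lemma isdp_const: "isdp m (\<lambda>h x. c)"
  unfolding isdp_def by (rule exI[of _ "DConst c"]) simp

lemma isdp_var: "1 \<le> a \<Longrightarrow> a \<le> m \<Longrightarrow> 1 \<le> l \<Longrightarrow> isdp m (\<lambda>h x. h a l x)"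
  unfolding isdp_def by (rule exI[of _ "DVar a l 0"]) (simp add: Vm_def)

lemma isdp_add: "isdp m F \<Longrightarrow> isdp m G \<Longrightarrow> isdp m (\<lambda>h x. F h x + G h x)"
  unfolding isdp_def
proof (elim exE conjE)
  fix p q assume "dp_vars p \<subseteq> Vm m" "\<forall>h\<in>data_space m. \<forall>x. F h x = dp_eval p h x"
    "dp_vars q \<subseteq> Vm m" "\<forall>h\<in>data_space m. \<forall>x. G h x = dp_eval q h x"
  then show "\<exists>p. dp_vars p \<subseteq> Vm m \<and> (\<forall>h\<in>data_space m. \<forall>x. F h x + G h x = dp_eval p h x)"
    by (intro exI[of _ "DAdd p q"]) auto
qed

lemma isdp_mul: "isdp m F \<Longrightarrow> isdp m G \<Longrightarrow> isdp m (\<lambda>h x. F h x * G h x)"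
  unfolding isdp_def
proof (elim exE conjE)
  fix p q assume "dp_vars p \<subseteq> Vm m" "\<forall>h\<in>data_space m. \<forall>x. F h x = dp_eval p h x"
    "dp_vars q \<subseteq> Vm m" "\<forall>h\<in>data_space m. \<forall>x. G h x = dp_eval q h x"
  then show "\<exists>p. dp_vars p \<subseteq> Vm m \<and> (\<forall>h\<in>data_space m. \<forall>x. F h x * G h x = dp_eval p h x)"
    by (intro exI[of _ "DMul p q"]) auto
qed

lemma isdp_diff: "isdp m F \<Longrightarrow> isdp m G \<Longrightarrow> isdp m (\<lambda>h x. F h x - G h x)"
proof -
  assume "isdp m F" "isdp m G"
  then have "isdp m (\<lambda>h x. F h x + (-1) * G h x)" by (intro isdp_add isdp_mul isdp_const)
  then show ?thesis by simp
qed

lemma isdp_cong: "isdp m F \<Longrightarrow> (\<And>h x. h \<in> data_space m \<Longrightarrow> F h x = G h x) \<Longrightarrow> isdp m G"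
  unfolding isdp_def by metis

lemma isdp_sum: "finite A \<Longrightarrow> (\<And>a. a \<in> A \<Longrightarrow> isdp m (F a)) \<Longrightarrow> isdp m (\<lambda>h x. \<Sum>a\<in>A. F a h x)"
proof (induction A rule: finite_induct)
  case empty then show ?case by (simp add: isdp_const)
next
  case (insert a A)
  then have "isdp m (\<lambda>h x. F a h x + (\<Sum>a\<in>A. F a h x))" by (intro isdp_add) auto
  then show ?case using insert by simp
qed

fun dpd :: "dpoly \<Rightarrow> dpoly" where
  "dpd (DConst c) = DConst 0"
| "dpd (DVar a l r) = DVar a l (Suc r)"
| "dpd (DAdd p q) = DAdd (dpd p) (dpd q)"
| "dpd (DMul p q) = DAdd (DMul (dpd p) q) (DMul p (dpd q))"

lemma dpd_vars: "dp_vars (dpd p) = dp_vars p"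
  by (induction p) auto

lemma deriv_zero_fun: "deriv (\<lambda>_. 0::real) = (\<lambda>_. 0)"
  by (rule ext) (rule deriv_const_fun, simp)

lemma smooth_zero: "smooth_fun (\<lambda>_. 0)"
proof -
  have "(deriv ^^ n) (\<lambda>_. 0::real) = (\<lambda>_. 0)" for n
    by (induction n) (auto simp: deriv_zero_fun)
  then show ?thesis unfolding smooth_fun_def by simp
qed

lemma data_smooth: "h \<in> data_space m \<Longrightarrow> smooth_fun (h a l)"
  unfolding data_space_def using smooth_zero by (cases "1 \<le> a \<and> a \<le> m \<and> 1 \<le> l") auto

lemma dpd_deriv:
  assumes h: "h \<in> data_space m"
  shows "((\<lambda>x. dp_eval p h x) has_real_derivative dp_eval (dpd p) h x) (at x)"
proof (induction p arbitrary: x)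
  case (DConst c) then show ?case by simp
next
  case (DVar a l r)
  have "((deriv ^^ r) (h a l)) differentiable (at x)"
    using data_smooth[OF h] unfolding smooth_fun_def by blast
  then have "((deriv ^^ r) (h a l) has_real_derivative deriv ((deriv ^^ r) (h a l)) x) (at x)"
    using DERIV_deriv_iff_real_differentiable by blast
  then show ?case by simp
next
  case (DAdd p q) then show ?case by (simp add: DERIV_add)
next
  case (DMul p q)
  from DERIV_mult[OF DMul.IH(1) DMul.IH(2)] show ?case by (simp add: algebra_simps)
qed

lemma isdp_deriv:
  assumes "isdp m F"
  shows "isdp m (\<lambda>h x. deriv (F h) x)"
proof -
  obtain p where p: "dp_vars p \<subseteq> Vm m" "\<forall>h\<in>data_space m. \<forall>x. F h x = dp_eval p h x"
    using assms unfolding isdp_def by blast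
  show ?thesis unfolding isdp_def
  proof (intro exI[of _ "dpd p"] conjI ballI allI)
    show "dp_vars (dpd p) \<subseteq> Vm m" using p by (simp add: dpd_vars)
    fix h x assume h: "h \<in> data_space m"
    then have "F h = (\<lambda>x. dp_eval p h x)" using p by auto
    then show "deriv (F h) x = dp_eval (dpd p) h x"
      using DERIV_imp_deriv[OF dpd_deriv[OF h]] by simp
  qed
qed

lemma isdp_deriv_has:
  assumes "isdp m F" "h \<in> data_space m"
  shows "(F h has_real_derivative deriv (F h) x) (at x)"
proof -
  obtain p where p: "\<forall>h\<in>data_space m. \<forall>x. F h x = dp_eval p h x"
    using assms unfolding isdp_def by blast
  then have "F h = (\<lambda>x. dp_eval p h x)" using assms by auto
  then show ?thesis using dpd_deriv[OF assms(2)] DERIV_imp_deriv[OF dpd_deriv[OF assms(2)]] by simp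
qed

lemma gen_isdp:
  assumes m: "1 \<le> m"
  shows "isdp m (\<lambda>h x. fls_nth (gen m h k x) i)"
proof (induction k arbitrary: i rule: less_induct)
  case (less k)
  show ?case
  proof (cases "i \<le> 0")
    case True
    show ?thesis
      by (rule isdp_cong[OF isdp_const[of m "if i = - int k then 1 else 0"]])
         (use gen_shape[OF m] True in \<open>simp add: shape_def\<close>)
  next
    case ipos: False
    show ?thesis
    proof (cases "k = 0")
      case True
      show ?thesis by (rule isdp_cong[OF isdp_const[of m 0]]) (use True ipos in \<open>simp add: gen_0\<close>)
    next
      case k0: False
      show ?thesis
      proof (cases "k \<le> m")
        case True
        show ?thesis
          by (rule isdp_cong[OF isdp_var[of k m "nat i"]]) (use True k0 ipos in \<open>auto simp: gen_le cur_nth\<close>)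
      next
        case False
        define j where "j = k - m"
        have nj: "k = m + j" "j < k" "m < k" "1 \<le> j" using False m j_def by auto
        have d: "isdp m (\<lambda>h x. deriv (\<lambda>y. fls_nth (gen m h j y) i) x)"
          using isdp_deriv[OF less[OF nj(2), of i]] by simp
        have p: "isdp m (\<lambda>h x. \<Sum>t=-int m..i+int j. fls_nth (gen m h m x) t * fls_nth (gen m h j x) (i - t))"
          by (intro isdp_sum isdp_mul less nj) auto
        have s1: "isdp m (\<lambda>h x. \<Sum>l=1..j. fls_nth (gen m h m x) (int l) * fls_nth (gen m h (j - l) x) i)"
          by (intro isdp_sum isdp_mul less) (use nj in auto)
        have s2: "isdp m (\<lambda>h x. \<Sum>l=1..m. fls_nth (gen m h j x) (int l) * fls_nth (gen m h (m - l) x) i)"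
          by (intro isdp_sum isdp_mul less) (use nj in auto)
        have all: "isdp m (\<lambda>h x. deriv (\<lambda>y. fls_nth (gen m h j y) i) x
           + (\<Sum>t=-int m..i+int j. fls_nth (gen m h m x) t * fls_nth (gen m h j x) (i - t))
           - (\<Sum>l=1..j. fls_nth (gen m h m x) (int l) * fls_nth (gen m h (j - l) x) i)
           - (\<Sum>l=1..m. fls_nth (gen m h j x) (int l) * fls_nth (gen m h (m - l) x) i))"
          by (intro isdp_diff isdp_add d p s1 s2)
        show ?thesis
        proof (rule isdp_cong[OF all])
          fix h x
          have shj: "\<forall>y. shape j (gen m h j y)" using gen_shape[OF m] by blast
          have prod: "fls_nth (gen m h m x * gen m h j x) i
             = (\<Sum>t=-int m..i+int j. fls_nth (gen m h m x) t * fls_nth (gen m h j x) (i - t))"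
            by (rule fls_mult_bounded) (auto intro: shape_lower[OF gen_shape[OF m]])
          have g: "gen m h k x = fls_dx (gen m h j) x + gen m h m x * gen m h j x
             - (\<Sum>l=1..j. fls_const (hc (gen m h m x) l) * gen m h (j - l) x)
             - (\<Sum>l=1..m. fls_const (hc (gen m h j x) l) * gen m h (m - l) x)"
            using gen_gt[OF m nj(3), of h x] unfolding j_def by simp
          show "deriv (\<lambda>y. fls_nth (gen m h j y) i) x
           + (\<Sum>t=-int m..i+int j. fls_nth (gen m h m x) t * fls_nth (gen m h j x) (i - t))
           - (\<Sum>l=1..j. fls_nth (gen m h m x) (int l) * fls_nth (gen m h (j - l) x) i)
           - (\<Sum>l=1..m. fls_nth (gen m h j x) (int l) * fls_nth (gen m h (m - l) x) i)
           = fls_nth (gen m h k x) i"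
            unfolding g fls_minus_nth fls_plus_nth fls_nth_sum
              fls_mult_const_nth prod fls_dx_nth[OF shj] hc_def
            by simp
        qed
      qed
    qed
  qed
qed


lemma cs_rhs_0: "H 0 = 1 \<Longrightarrow> hc (cs_rhs H m 0) l = 0"
  by (simp add: cs_rhs_def hc_def)

lemma hc_one: "1 \<le> l \<Longrightarrow> hc 1 l = 0"
  by (simp add: hc_def)

lemma gen_ic:
  assumes m: "1 \<le> m" and h: "h \<in> data_space m"
  shows "integral_curve m (\<lambda>x k. gen m h k x)"
  unfolding integral_curve_def
proof (intro conjI allI impI)
  fix x show "(\<lambda>k. gen m h k x) \<in> Hspace" using gen_shape[OF m] by (simp add: Hspace_iff)
next
  fix x :: real and k l :: nat
  assume l: "1 \<le> l"
  show "((\<lambda>y. hc (gen m h k y) l) has_real_derivative Xcomp m (\<lambda>k. gen m h k x) k l) (at x)"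
  proof (cases "k = 0")
    case True
    have "(\<lambda>y. hc (gen m h k y) l) = (\<lambda>_. 0)" using True l by (simp add: gen_0 hc_one)
    moreover have "Xcomp m (\<lambda>k. gen m h k x) k l = 0"
      unfolding Xcomp_def True by (rule cs_rhs_0) (simp add: gen_0)
    ultimately show ?thesis by simp
  next
    case False
    have shk: "\<forall>y. shape k (gen m h k y)" using gen_shape[OF m] by blast
    have "gen m h (m + k) x = fls_dx (gen m h k) x + gen m h m x * gen m h k x
             - (\<Sum>l=1..k. fls_const (hc (gen m h m x) l) * gen m h (k - l) x)
             - (\<Sum>l=1..m. fls_const (hc (gen m h k x) l) * gen m h (m - l) x)"
      using gen_gt[OF m, of "m + k" h x] False by simp
    then have "cs_rhs (\<lambda>k. gen m h k x) m k = fls_dx (gen m h k) x"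
      unfolding cs_rhs_def by simp
    then have X: "Xcomp m (\<lambda>k. gen m h k x) k l = deriv (\<lambda>y. hc (gen m h k y) l) x"
      unfolding Xcomp_def hc_def using fls_dx_nth[OF shk] by simp
    have "isdp m (\<lambda>h y. hc (gen m h k y) l)"
      unfolding hc_def by (rule gen_isdp[OF m])
    from isdp_deriv_has[OF this h] show ?thesis unfolding X by simp
  qed
qed

inductive_set Pc :: "(real \<Rightarrow> nat \<Rightarrow> real fls) \<Rightarrow> (real \<Rightarrow> real) set" for \<gamma> where
  Pconst: "(\<lambda>_. c) \<in> Pc \<gamma>"
| Pvar: "(\<lambda>x. fls_nth (\<gamma> x k) i) \<in> Pc \<gamma>"
| Padd: "f \<in> Pc \<gamma> \<Longrightarrow> g \<in> Pc \<gamma> \<Longrightarrow> (\<lambda>x. f x + g x) \<in> Pc \<gamma>"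
| Pmul: "f \<in> Pc \<gamma> \<Longrightarrow> g \<in> Pc \<gamma> \<Longrightarrow> (\<lambda>x. f x * g x) \<in> Pc \<gamma>"

lemma Pdiff: "f \<in> Pc \<gamma> \<Longrightarrow> g \<in> Pc \<gamma> \<Longrightarrow> (\<lambda>x. f x - g x) \<in> Pc \<gamma>"
proof -
  assume "f \<in> Pc \<gamma>" "g \<in> Pc \<gamma>"
  then have "(\<lambda>x. f x + (\<lambda>_. -1) x * g x) \<in> Pc \<gamma>" by (intro Padd Pmul Pconst)
  then show ?thesis by simp
qed

lemma Psum: "finite A \<Longrightarrow> (\<And>a. a \<in> A \<Longrightarrow> f a \<in> Pc \<gamma>) \<Longrightarrow> (\<lambda>x. \<Sum>a\<in>A. f a x) \<in> Pc \<gamma>"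
proof (induction A rule: finite_induct)
  case empty then show ?case using Pconst[of 0] by simp
next
  case (insert a A)
  then have "(\<lambda>x. f a x + (\<Sum>a\<in>A. f a x)) \<in> Pc \<gamma>" by (intro Padd) auto
  then show ?case using insert by simp
qed

lemma P_deriv:
  assumes ic: "integral_curve m \<gamma>" and f: "f \<in> Pc \<gamma>"
  shows "\<exists>g \<in> Pc \<gamma>. \<forall>x. (f has_real_derivative g x) (at x)"
  using f
proof induction
  case (Pconst c) show ?case by (rule bexI[of _ "\<lambda>_. 0"]) (auto intro: Pc.Pconst)
next
  case (Pvar k i)
  show ?case
  proof (cases "i \<le> 0")
    case True
    have "(\<lambda>x. fls_nth (\<gamma> x k) i) = (\<lambda>_. if i = - int k then 1 else 0)"
      using ic_shape[OF ic] True by (auto simp: shape_def)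
    then show ?thesis using Pc.Pconst[of 0] by (intro bexI[of _ "\<lambda>_. 0"]) auto
  next
    case False
    then have i: "i = int (nat i)" "1 \<le> nat i" by auto
    define g where "g = (\<lambda>x. Xcomp m (\<gamma> x) k (nat i))"
    have der: "\<forall>x. ((\<lambda>x. fls_nth (\<gamma> x k) i) has_real_derivative g x) (at x)"
      using ic_deriv[OF ic i(2)] i(1) unfolding g_def hc_def by metis
    have prod: "fls_nth (\<gamma> x m * \<gamma> x k) i
             = (\<Sum>t=-int m..i+int k. fls_nth (\<gamma> x m) t * fls_nth (\<gamma> x k) (i - t))" for x
      by (rule fls_mult_bounded) (auto intro: shape_lower[OF ic_shape[OF ic]])
    have geq: "g = (\<lambda>x. fls_nth (\<gamma> x (m + k)) i
       - (\<Sum>t=-int m..i+int k. fls_nth (\<gamma> x m) t * fls_nth (\<gamma> x k) (i - t))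
       + (\<Sum>l=1..k. fls_nth (\<gamma> x m) (int l) * fls_nth (\<gamma> x (k - l)) i)
       + (\<Sum>l=1..m. fls_nth (\<gamma> x k) (int l) * fls_nth (\<gamma> x (m - l)) i))"
      unfolding g_def Xcomp_def cs_rhs_def
      by (rule ext) (use False in \<open>simp add: hc_def fls_nth_sum prod[symmetric] i(1)[symmetric]\<close>)
    have "g \<in> Pc \<gamma>" unfolding geq
      by (intro Padd Pdiff Psum Pmul Pc.Pvar) auto
    then show ?thesis using der by blast
  qed
next
  case (Padd f g)
  then obtain f' g' where "f' \<in> Pc \<gamma>" "g' \<in> Pc \<gamma>" "\<forall>x. (f has_real_derivative f' x) (at x)"
    "\<forall>x. (g has_real_derivative g' x) (at x)" by blast
  then show ?case by (intro bexI[of _ "\<lambda>x. f' x + g' x"]) (auto intro: DERIV_add Pc.Padd)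
next
  case (Pmul f g)
  then obtain f' g' where fg: "f' \<in> Pc \<gamma>" "g' \<in> Pc \<gamma>" "\<forall>x. (f has_real_derivative f' x) (at x)"
    "\<forall>x. (g has_real_derivative g' x) (at x)" by blast
  have "(\<lambda>x. f' x * g x + g' x * f x) \<in> Pc \<gamma>" using fg Pmul by (intro Pc.Padd Pc.Pmul) auto
  moreover have "\<forall>x. ((\<lambda>x. f x * g x) has_real_derivative f' x * g x + g' x * f x) (at x)"
    using fg by (auto intro: DERIV_mult)
  ultimately show ?case by (intro bexI[of _ "\<lambda>x. f' x * g x + g' x * f x"]) auto
qed

lemma P_smooth:
  assumes ic: "integral_curve m \<gamma>" and f: "f \<in> Pc \<gamma>"
  shows "smooth_fun f"
proof -
  have "(deriv ^^ n) f \<in> Pc \<gamma>" for n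
  proof (induction n)
    case 0 then show ?case using f by simp
  next
    case (Suc n)
    then obtain g where g: "g \<in> Pc \<gamma>" "\<forall>x. ((deriv ^^ n) f has_real_derivative g x) (at x)"
      using P_deriv[OF ic] by blast
    then have "deriv ((deriv ^^ n) f) = g" using DERIV_imp_deriv by blast
    then show ?case using g by simp
  qed
  then show ?thesis unfolding smooth_fun_def real_differentiable_def
    using P_deriv[OF ic] by blast
qed

lemma ic_data:
  assumes ic: "integral_curve m \<gamma>"
  shows "first_currents m \<gamma> \<in> data_space m"
  unfolding data_space_def
proof (intro CollectI conjI allI impI)
  fix a l :: nat assume "1 \<le> a \<and> a \<le> m \<and> 1 \<le> l"
  then have "first_currents m \<gamma> a l = (\<lambda>x. fls_nth (\<gamma> x a) (int l))"
    by (auto simp: first_currents_def hc_def)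
  then show "smooth_fun (first_currents m \<gamma> a l)" using P_smooth[OF ic Pc.Pvar] by simp
next
  fix a l :: nat assume "\<not> (1 \<le> a \<and> a \<le> m \<and> 1 \<le> l)"
  then show "first_currents m \<gamma> a l = (\<lambda>_. 0)" by (auto simp: first_currents_def)
qed


lemma fc_gen:
  assumes m: "1 \<le> m" and h: "h \<in> data_space m"
  shows "first_currents m (\<lambda>x k. gen m h k x) = h"
proof (intro ext)
  fix a l x
  show "first_currents m (\<lambda>x k. gen m h k x) a l x = h a l x"
  proof (cases "1 \<le> a \<and> a \<le> m \<and> 1 \<le> l")
    case True then show ?thesis by (simp add: first_currents_def gen_le hc_cur)
  next
    case False
    have "h a l = (\<lambda>_. 0)" using h False unfolding data_space_def by blast
    then show ?thesis using False by (auto simp: first_currents_def)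
  qed
qed

theorem mainTheorem8:
  fixes m :: nat
  assumes "1 \<le> m"
  shows
    \<comment> \<open>each generated H^(j) has the form z^j + sum_{l>=1} H^j_l z^{-l}\<close>
    "(\<forall>h \<in> data_space m. \<forall>x. (\<lambda>k. gen m h k x) \<in> Hspace)
   \<and> \<comment> \<open>the H^j_l are differential polynomials in the coefficients of H^(1..m)\<close>
     (\<forall>j l. \<exists>p. dp_vars p \<subseteq> {(a, l'). 1 \<le> a \<and> a \<le> m \<and> 1 \<le> l'} \<and>
        (\<forall>h \<in> data_space m. \<forall>x. hc (gen m h j x) l = dp_eval p h x))
   \<and> \<comment> \<open>the first m currents are the given ones\<close>
     (\<forall>h \<in> data_space m. \<forall>a x. 1 \<le> a \<and> a \<le> m \<longrightarrow> gen m h a x = cur a (\<lambda>l. h a l x))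
   \<and> \<comment> \<open>x \<mapsto> (H^(k)(x))_k is an integral curve of X_m\<close>
     (\<forall>h \<in> data_space m. integral_curve m (\<lambda>x k. gen m h k x))
   \<and> \<comment> \<open>converse: every integral curve arises from its first m currents\<close>
     (\<forall>\<gamma>. integral_curve m \<gamma> \<longrightarrow>
        first_currents m \<gamma> \<in> data_space m \<and>
        (\<forall>x k. \<gamma> x k = gen m (first_currents m \<gamma>) k x))
   \<and> \<comment> \<open>hence integral curves of X_m correspond bijectively to m-tuples of currents\<close>
     bij_betw (first_currents m) {\<gamma>. integral_curve m \<gamma>} (data_space m)"
proof (intro conjI)
  have m: "1 \<le> m" by (rule assms)
  show "\<forall>h \<in> data_space m. \<forall>x. (\<lambda>k. gen m h k x) \<in> Hspace"
    using gen_shape[OF m] by (simp add: Hspace_iff)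
  show "\<forall>j l. \<exists>p. dp_vars p \<subseteq> {(a, l'). 1 \<le> a \<and> a \<le> m \<and> 1 \<le> l'} \<and>
        (\<forall>h \<in> data_space m. \<forall>x. hc (gen m h j x) l = dp_eval p h x)"
    using gen_isdp[OF m] unfolding isdp_def Vm_def hc_def by blast
  show "\<forall>h \<in> data_space m. \<forall>a x. 1 \<le> a \<and> a \<le> m \<longrightarrow> gen m h a x = cur a (\<lambda>l. h a l x)"
    by (simp add: gen_le)
  show "\<forall>h \<in> data_space m. integral_curve m (\<lambda>x k. gen m h k x)"
    using gen_ic[OF m] by blast
  show "\<forall>\<gamma>. integral_curve m \<gamma> \<longrightarrow>
        first_currents m \<gamma> \<in> data_space m \<and>
        (\<forall>x k. \<gamma> x k = gen m (first_currents m \<gamma>) k x)"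
    using ic_data curve_gen[OF m] by blast
  show "bij_betw (first_currents m) {\<gamma>. integral_curve m \<gamma>} (data_space m)"
    unfolding bij_betw_def
  proof (intro conjI)
    show "inj_on (first_currents m) {\<gamma>. integral_curve m \<gamma>}"
    proof (rule inj_onI)
      fix \<gamma>1 \<gamma>2 assume g1: "\<gamma>1 \<in> {\<gamma>. integral_curve m \<gamma>}" and g2: "\<gamma>2 \<in> {\<gamma>. integral_curve m \<gamma>}"
        and eq: "first_currents m \<gamma>1 = first_currents m \<gamma>2"
      have "\<gamma>1 x k = \<gamma>2 x k" for x k
        using curve_gen[OF m, of \<gamma>1 x k] curve_gen[OF m, of \<gamma>2 x k] g1 g2 eq by simp
      then show "\<gamma>1 = \<gamma>2" by (intro ext)
    qed
    show "first_currents m ` {\<gamma>. integral_curve m \<gamma>} = data_space m"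
    proof
      show "first_currents m ` {\<gamma>. integral_curve m \<gamma>} \<subseteq> data_space m" using ic_data by blast
      show "data_space m \<subseteq> first_currents m ` {\<gamma>. integral_curve m \<gamma>}"
      proof
        fix h assume h: "h \<in> data_space m"
        then show "h \<in> first_currents m ` {\<gamma>. integral_curve m \<gamma>}"
          using fc_gen[OF m h] gen_ic[OF m h] by (metis (mono_tags, lifting) image_eqI mem_Collect_eq)
      qed
    qed
  qed
qed

end
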